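(* Let $G$ be a connected graph with $\omega(G)=n(G)-3$. Then $$n(G)-8\le \dim_l(G)\le n(G)-3.$$ Furthermore, both bounds are sharp, i.e., for each bound there exist connected graphs $G$ with $\omega(G)=n(G)-3$ attaining it.
   Context: All graphs are finite and simple. $n(G)$ is the number of vertices and $\omega(G)$ the clique number of $G$. For vertices $x,y$ of a connected graph $G$, $d_G(x,y)$ is the length of a shortest $x,y$-path. A vertex $w$ distinguishes vertices $u,v$ if $d_G(u,w)\neq d_G(v,w)$. A set $W\subseteq V(G)$ is a local resolving set of $G$ if for every pair of adjacent vertices $u,v\in V(G)\setminus W$ some vertex of $W$ distinguishes $u$ and $v$. The local metric dimension $\dim_l(G)$ is the minimum cardinality of a local resolving set of $G$. *)

theory Defs
  imports Main
begin

definition graph :: "'a set \<Rightarrow> ('a \<Rightarrow> 'a \<Rightarrow> bool) \<Rightarrow> bool" where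
  "graph V E \<longleftrightarrow> finite V \<and> (\<forall>u v. E u v \<longrightarrow> u \<in> V \<and> v \<in> V)
     \<and> (\<forall>u v. E u v \<longrightarrow> E v u) \<and> (\<forall>v. \<not> E v v)"

fun walk :: "('a \<Rightarrow> 'a \<Rightarrow> bool) \<Rightarrow> 'a list \<Rightarrow> bool" where
  "walk E [] = False"
| "walk E [x] = True"
| "walk E (x # y # xs) = (E x y \<and> walk E (y # xs))"

definition connected :: "'a set \<Rightarrow> ('a \<Rightarrow> 'a \<Rightarrow> bool) \<Rightarrow> bool" where
  "connected V E \<longleftrightarrow> V \<noteq> {} \<and>
     (\<forall>u\<in>V. \<forall>v\<in>V. \<exists>xs. walk E xs \<and> hd xs = u \<and> last xs = v)"

definition dist :: "('a \<Rightarrow> 'a \<Rightarrow> bool) \<Rightarrow> 'a \<Rightarrow> 'a \<Rightarrow> nat" where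
  "dist E u v = (LEAST k. \<exists>xs. walk E xs \<and> hd xs = u \<and> last xs = v \<and> length xs = k + 1)"

definition clique :: "'a set \<Rightarrow> ('a \<Rightarrow> 'a \<Rightarrow> bool) \<Rightarrow> 'a set \<Rightarrow> bool" where
  "clique V E K \<longleftrightarrow> K \<subseteq> V \<and> (\<forall>u\<in>K. \<forall>v\<in>K. u \<noteq> v \<longrightarrow> E u v)"

definition clique_number :: "'a set \<Rightarrow> ('a \<Rightarrow> 'a \<Rightarrow> bool) \<Rightarrow> nat" where
  "clique_number V E = Max {card K | K. clique V E K}"

definition local_resolving_set :: "'a set \<Rightarrow> ('a \<Rightarrow> 'a \<Rightarrow> bool) \<Rightarrow> 'a set \<Rightarrow> bool" where
  "local_resolving_set V E W \<longleftrightarrow> W \<subseteq> V \<and>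
     (\<forall>u \<in> V - W. \<forall>v \<in> V - W. E u v \<longrightarrow> (\<exists>w\<in>W. dist E u w \<noteq> dist E v w))"

definition local_metric_dim :: "'a set \<Rightarrow> ('a \<Rightarrow> 'a \<Rightarrow> bool) \<Rightarrow> nat" where
  "local_metric_dim V E = (LEAST k. \<exists>W. local_resolving_set V E W \<and> card W = k)"

end

theory Submission
  imports Defs
begin


lemma walk_nonempty: "walk E xs \<Longrightarrow> xs \<noteq> []"
  by (cases xs) auto

lemma walk_closed:
  assumes "walk E xs" "hd xs \<in> A" "\<And>u v. u \<in> A \<Longrightarrow> E u v \<Longrightarrow> v \<in> A"
  shows "last xs \<in> A"
  using assms by (induction E xs rule: walk.induct) auto

lemma walk_append:
  assumes "walk E xs" "walk E ys" "last xs = hd ys"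
  shows "walk E (xs @ tl ys) \<and> hd (xs @ tl ys) = hd xs \<and> last (xs @ tl ys) = last ys"
  using assms
proof (induction E xs rule: walk.induct)
  case (1 E) then show ?case by simp
next
  case (2 E x)
  then show ?case by (cases ys) auto
next
  case (3 E x y xs)
  then show ?case by (auto simp: walk_nonempty)
qed

lemma dist_self: "dist E u u = 0"
  unfolding dist_def by (rule Least_eq_0) (rule exI[of _ "[u]"], simp)

lemma dist_adj:
  assumes "graph V E" "E u v" shows "dist E u v = 1"
  unfolding dist_def
proof (rule Least_equality)
  show "\<exists>xs. walk E xs \<and> hd xs = u \<and> last xs = v \<and> length xs = 1 + 1"
    by (rule exI[of _ "[u,v]"]) (simp add: assms)
next
  fix y assume "\<exists>xs. walk E xs \<and> hd xs = u \<and> last xs = v \<and> length xs = y + 1"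
  then obtain xs where xs: "walk E xs" "hd xs = u" "last xs = v" "length xs = y + 1" by blast
  show "1 \<le> y"
  proof (rule ccontr)
    assume "\<not> 1 \<le> y"
    then have "y = 0" by simp
    with xs have "u = v" by (cases xs) auto
    with assms show False unfolding graph_def by auto
  qed
qed

lemma dist_two:
  assumes "u \<noteq> v" "\<not> E u v" "E u c" "E c v" shows "dist E u v = 2"
  unfolding dist_def
proof (rule Least_equality)
  show "\<exists>xs. walk E xs \<and> hd xs = u \<and> last xs = v \<and> length xs = 2 + 1"
    by (rule exI[of _ "[u,c,v]"]) (simp add: assms)
next
  fix y assume "\<exists>xs. walk E xs \<and> hd xs = u \<and> last xs = v \<and> length xs = y + 1"
  then obtain xs where xs: "walk E xs" "hd xs = u" "last xs = v" "length xs = y + 1" by blast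
  show "2 \<le> y"
  proof (rule ccontr)
    assume "\<not> 2 \<le> y"
    then have "y = 0 \<or> y = 1" by auto
    then show False
    proof
      assume "y = 0" with xs assms show False by (cases xs) auto
    next
      assume "y = 1" with xs assms show False
        by (cases xs; cases "tl xs") auto
    qed
  qed
qed

lemma dist_witness:
  assumes "connected V E" "u \<in> V" "v \<in> V"
  shows "\<exists>xs. walk E xs \<and> hd xs = u \<and> last xs = v \<and> length xs = dist E u v + 1"
proof -
  obtain xs where xs: "walk E xs" "hd xs = u" "last xs = v"
    using assms unfolding connected_def by blast
  then have "xs \<noteq> []" by (simp add: walk_nonempty)
  then have "\<exists>xs'. walk E xs' \<and> hd xs' = u \<and> last xs' = v \<and> length xs' = (length xs - 1) + 1"
    using xs by (intro exI[of _ xs]) auto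
  then show ?thesis unfolding dist_def
    by (rule LeastI_ex[where P="\<lambda>k. \<exists>xs. walk E xs \<and> hd xs = u \<and> last xs = v \<and> length xs = k + 1", OF exI])
qed

lemma dist_one_adj:
  assumes "connected V E" "u \<in> V" "v \<in> V" "dist E u v = 1"
  shows "E u v"
proof -
  obtain xs where xs: "walk E xs" "hd xs = u" "last xs = v" "length xs = 2"
    using dist_witness[OF assms(1-3)] assms(4) by auto
  then show ?thesis by (cases xs; cases "tl xs") auto
qed

lemma dist_step:
  assumes "connected V E" "E u v" "v \<in> V" "w \<in> V"
  shows "dist E u w \<le> dist E v w + 1"
proof -
  obtain xs where xs: "walk E xs" "hd xs = v" "last xs = w" "length xs = dist E v w + 1"
    using dist_witness[OF assms(1,3,4)] by blast
  then have ne: "xs \<noteq> []" by (simp add: walk_nonempty)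
  have "walk E (u # xs)" using xs ne assms(2) by (cases xs) auto
  moreover have "hd (u # xs) = u" "last (u # xs) = w" "length (u # xs) = (dist E v w + 1) + 1"
    using xs ne by auto
  ultimately show ?thesis unfolding dist_def by (intro Least_le) blast
qed

lemma dist_sep:
  assumes "graph V E" "connected V E" "a \<in> V" "b \<in> V" "w \<in> V" "E w a \<noteq> E w b"
  shows "dist E a w \<noteq> dist E b w"
proof -
  have sym: "\<And>x y. E x y \<Longrightarrow> E y x" using assms(1) unfolding graph_def by blast
  show ?thesis
  proof (cases "E w a")
    case True
    then have "\<not> E w b" using assms(6) by simp
    have "dist E a w = 1" using dist_adj[OF assms(1) sym[OF True]] .
    moreover have "dist E b w \<noteq> 1"
      using dist_one_adj[OF assms(2,4,5)] sym \<open>\<not> E w b\<close> by blast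
    ultimately show ?thesis by simp
  next
    case False
    then have "E w b" using assms(6) by simp
    have "dist E b w = 1" using dist_adj[OF assms(1) sym[OF \<open>E w b\<close>]] .
    moreover have "dist E a w \<noteq> 1"
      using dist_one_adj[OF assms(2,3,5)] sym False by blast
    ultimately show ?thesis by simp
  qed
qed

lemma clique_facts:
  assumes "graph V E"
  shows "\<exists>K. clique V E K \<and> card K = clique_number V E"
    and "clique V E K \<Longrightarrow> card K \<le> clique_number V E"
proof -
  have fin: "finite V" using assms unfolding graph_def by blast
  let ?S = "{card K | K. clique V E K}"
  have "?S \<subseteq> {..card V}"
    using fin by (auto simp: clique_def card_mono)
  then have f: "finite ?S" by (rule finite_subset) simp
  have ne: "?S \<noteq> {}" by (auto simp: clique_def intro: exI[of _ "{}"])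
  show "\<exists>K. clique V E K \<and> card K = clique_number V E"
    using Max_in[OF f ne] unfolding clique_number_def by auto
  show "clique V E K \<Longrightarrow> card K \<le> clique_number V E"
    unfolding clique_number_def using f by (intro Max_ge) auto
qed


lemma pow_small: "(t::nat) \<le> 3 \<Longrightarrow> 2 ^ t \<le> t + 5"
  by (cases t; cases "t - 1"; cases "t - 2"; cases "t - 3") auto

lemma lower_bound:
  assumes g: "graph V E" and c: "connected V E" and w: "clique_number V E + 3 = card V"
    and r: "local_resolving_set V E W"
  shows "card V \<le> card W + 8"
proof -
  have fin: "finite V" using g unfolding graph_def by blast
  obtain K where K: "clique V E K" "card K = clique_number V E" using clique_facts(1)[OF g] by blast
  have KV: "K \<subseteq> V" using K unfolding clique_def by blast
  have WV: "W \<subseteq> V" using r unfolding local_resolving_set_def by blast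
  have finK: "finite K" using KV fin finite_subset by blast
  have finW: "finite W" using WV fin finite_subset by blast
  define U where "U = K - W"
  define T where "T = W - K"
  have cVK: "card (V - K) = 3" using w K KV fin by (simp add: card_Diff_subset finite_subset)
  have T3: "card T \<le> 3"
    unfolding T_def using cVK WV fin by (metis Diff_mono card_mono finite_Diff order_refl)
  have finT: "finite T" unfolding T_def using finW by simp
  have cW: "card W = card (W \<inter> K) + card T" unfolding T_def using card_Int_Diff[OF finW] .
  have cK: "card K = card (K \<inter> W) + card U" unfolding U_def using card_Int_Diff[OF finK] .
  have UP: "card U \<le> 2 ^ card T"
  proof (cases "U = {}")
    case True then show ?thesis by simp
  next
    case False
    have finU: "finite U" unfolding U_def using finK by simp
    define m where "m w = Min ((\<lambda>u. dist E u w) ` U)" for w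
    define f where "f u = {w\<in>T. dist E u w = m w}" for u
    have lo: "m w \<le> dist E u w" if "u \<in> U" for u w
      unfolding m_def using finU that by (intro Min_le) auto
    have hi: "dist E u w \<le> m w + 1" if "u \<in> U" "w \<in> T" for u w
    proof -
      have "m w \<in> (\<lambda>u. dist E u w) ` U"
        unfolding m_def using finU False by (intro Min_in) auto
      then obtain u' where u': "u' \<in> U" "dist E u' w = m w" by auto
      show ?thesis
      proof (cases "u = u'")
        case True then show ?thesis using u' by simp
      next
        case False
        have "E u u'" using K(1) that(1) u'(1) False unfolding clique_def U_def by blast
        moreover have "u' \<in> V" "w \<in> V" using u'(1) that(2) KV WV unfolding U_def T_def by auto
        ultimately show ?thesis using dist_step[OF c] u' by fastforce
      qed
    qed
    have inj: "inj_on f U"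
    proof (rule inj_onI)
      fix u v assume uv: "u \<in> U" "v \<in> U" "f u = f v"
      show "u = v"
      proof (rule ccontr)
        assume ne: "u \<noteq> v"
        have "E u v" using K(1) uv ne unfolding clique_def U_def by blast
        moreover have "u \<in> V - W" "v \<in> V - W" using uv KV unfolding U_def by auto
        ultimately obtain w where ww: "w \<in> W" "dist E u w \<noteq> dist E v w"
          using r unfolding local_resolving_set_def by blast
        show False
        proof (cases "w \<in> K")
          case True
          have "u \<noteq> w" "v \<noteq> w" using uv ww(1) unfolding U_def by auto
          then have "E u w" "E v w" using K(1) True uv unfolding clique_def U_def by auto
          then show False using dist_adj[OF g] ww(2) by simp
        next
          case False
          then have wT: "w \<in> T" unfolding T_def using ww(1) by simp
          have "(w \<in> f u) = (w \<in> f v)" using uv(3) by simp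
          then have "(dist E u w = m w) = (dist E v w = m w)" unfolding f_def using wT by simp
          moreover have "m w \<le> dist E u w" "m w \<le> dist E v w" using lo uv by auto
          moreover have "dist E u w \<le> m w + 1" "dist E v w \<le> m w + 1" using hi uv wT by auto
          ultimately show False using ww(2) by linarith
        qed
      qed
    qed
    have "f ` U \<subseteq> Pow T" unfolding f_def by auto
    then have "card U \<le> card (Pow T)" using card_inj_on_le[OF inj] finT by simp
    then show ?thesis using card_Pow[OF finT] by simp
  qed
  have "card T \<le> 3" by (rule T3)
  then have "2 ^ card T \<le> card T + 5" by (rule pow_small)
  then show ?thesis using cW cK UP w K(2) by (simp add: Int_commute)
qed



lemma side_clique:
  assumes g: "graph V E" and pV: "p \<in> V"
    and H: "\<forall>r\<in>V - {p,q}. (E r p \<and> (\<forall>w\<in>V - {p,q,r}. E w r = E w p))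
                          \<or> (E r q \<and> (\<forall>w\<in>V - {p,q,r}. E w r = E w q))"
    and all: "\<forall>r\<in>V - {p,q}. E r p"
  shows "clique V E (insert p (V - {p,q}))"
proof -
  have sym: "\<And>x y. E x y \<Longrightarrow> E y x" using g unfolding graph_def by blast
  have "E a b" if a: "a \<in> insert p (V - {p,q})" and b: "b \<in> insert p (V - {p,q})" and ab: "a \<noteq> b" for a b
  proof (cases "a = p")
    case True then show ?thesis using all b ab sym by blast
  next
    case aP: False
    show ?thesis
    proof (cases "b = p")
      case True then show ?thesis using all a aP by auto
    next
      case bP: False
      have aR: "a \<in> V - {p,q}" and bR: "b \<in> V - {p,q}" using a b aP bP by auto
      from bspec[OF H aR] show ?thesis
      proof
        assume "E a p \<and> (\<forall>w\<in>V - {p,q,a}. E w a = E w p)"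
        then have "E b a = E b p" using bR ab by auto
        then show ?thesis using all bR sym by blast
      next
        assume A: "E a q \<and> (\<forall>w\<in>V - {p,q,a}. E w a = E w q)"
        from bspec[OF H bR] show ?thesis
        proof
          assume "E b p \<and> (\<forall>w\<in>V - {p,q,b}. E w b = E w p)"
          then have "E a b = E a p" using aR ab by auto
          then show ?thesis using all aR by auto
        next
          assume "E b q \<and> (\<forall>w\<in>V - {p,q,b}. E w b = E w q)"
          then have "E b a = E b q" using A bR ab by auto
          then show ?thesis using \<open>E b q \<and> _\<close> sym by blast
        qed
      qed
    qed
  qed
  then show ?thesis using pV unfolding clique_def by auto
qed

lemma upper_bound:
  assumes g: "graph V E" and c: "connected V E" and w: "clique_number V E + 3 = card V"
  shows "\<exists>W. local_resolving_set V E W \<and> card W + 3 = card V"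
proof -
  have fin: "finite V" using g unfolding graph_def by blast
  have sym: "\<And>x y. E x y \<Longrightarrow> E y x" using g unfolding graph_def by blast
  have inV: "\<And>x y. E x y \<Longrightarrow> x \<in> V \<and> y \<in> V" using g unfolding graph_def by blast
  have big: "card K + 3 \<le> card V" if "clique V E K" for K using clique_facts(2)[OF g that] w by linarith
  obtain p q where pq: "p \<in> V" "q \<in> V" "p \<noteq> q" "\<not> E p q"
  proof -
    have "\<not> clique V E V" using big[of V] by linarith
    then show ?thesis using that unfolding clique_def by blast
  qed
  define R where "R = V - {p,q}"
  have cR: "card R + 2 = card V"
  proof -
    have "card R = card V - card {p,q}" unfolding R_def using pq fin by (intro card_Diff_subset) auto
    moreover have "card {p,q} = 2" using pq by simp
    moreover have "card {p,q} \<le> card V" using pq fin by (intro card_mono) auto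
    ultimately show ?thesis by simp
  qed
  define ok where "ok r \<longleftrightarrow> (E r p \<longrightarrow> (\<exists>w\<in>V - {p,q,r}. E w r \<noteq> E w p))
                         \<and> (E r q \<longrightarrow> (\<exists>w\<in>V - {p,q,r}. E w r \<noteq> E w q))" for r
  have "\<exists>r\<in>R. ok r"
  proof (rule ccontr)
    assume "\<not> (\<exists>r\<in>R. ok r)"
    then have H: "\<forall>r\<in>V - {p,q}. (E r p \<and> (\<forall>w\<in>V - {p,q,r}. E w r = E w p))
                          \<or> (E r q \<and> (\<forall>w\<in>V - {p,q,r}. E w r = E w q))"
      unfolding ok_def R_def by blast
    have H': "\<forall>r\<in>V - {q,p}. (E r q \<and> (\<forall>w\<in>V - {q,p,r}. E w r = E w q))
                          \<or> (E r p \<and> (\<forall>w\<in>V - {q,p,r}. E w r = E w p))"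
    proof (intro ballI)
      fix r assume "r \<in> V - {q,p}"
      then have "r \<in> V - {p,q}" by blast
      moreover have e: "V - {q,p,r} = V - {p,q,r}" by blast
      ultimately show "(E r q \<and> (\<forall>w\<in>V - {q,p,r}. E w r = E w q))
                          \<or> (E r p \<and> (\<forall>w\<in>V - {q,p,r}. E w r = E w p))"
        using bspec[OF H] unfolding e by blast
    qed
    have cardins: "card (insert x R) + 3 > card V" if "x \<in> {p,q}" for x
    proof -
      have "x \<notin> R" using that unfolding R_def by auto
      moreover have "finite R" using fin unfolding R_def by simp
      ultimately show ?thesis using cR by simp
    qed
    show False
    proof (cases "\<forall>r\<in>R. E r p")
      case True
      then have "clique V E (insert p R)" unfolding R_def using side_clique[OF g pq(1) H] by blast
      then have "card (insert p R) + 3 \<le> card V" by (rule big)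
      then show False using cardins[of p] by simp
    next
      case nP: False
      show False
      proof (cases "\<forall>r\<in>R. E r q")
        case True
        then have "clique V E (insert q (V - {q,p}))" using side_clique[OF g pq(2) H'] unfolding R_def
          by (simp add: insert_commute)
        then have "clique V E (insert q R)" unfolding R_def by (simp add: insert_commute)
        then have "card (insert q R) + 3 \<le> card V" by (rule big)
        then show False using cardins[of q] by simp
      next
        case nQ: False
        obtain r0 where r0: "r0 \<in> R" "\<not> E r0 p" using nP by blast
        obtain s0 where s0: "s0 \<in> R" "\<not> E s0 q" using nQ by blast
        have r0Q: "E r0 q \<and> (\<forall>w\<in>V - {p,q,r0}. E w r0 = E w q)" using H r0 unfolding R_def by blast
        have s0P: "E s0 p \<and> (\<forall>w\<in>V - {p,q,s0}. E w s0 = E w p)" using H s0 unfolding R_def by blast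
        define A where "A = insert p {r\<in>R. E r p \<and> (\<forall>w\<in>V - {p,q,r}. E w r = E w p)}"
        have noQp: "\<not> E v p" if "v \<in> R" "E v q \<and> (\<forall>w\<in>V - {p,q,v}. E w v = E w q)" for v
        proof
          assume vp: "E v p"
          have "s0 \<noteq> v" using s0 that by auto
          then have "E s0 v = E s0 q" using that s0 unfolding R_def by auto
          moreover have "E v s0 = E v p" using s0P that \<open>s0 \<noteq> v\<close> unfolding R_def by auto
          ultimately show False using vp s0 sym by blast
        qed
        have closed: "v \<in> A" if "u \<in> A" "E u v" for u v
        proof (rule ccontr)
          assume vA: "v \<notin> A"
          have vV: "v \<in> V" using inV that(2) by blast
          show False
          proof (cases "v = q")
            case True
            then have up: "u \<noteq> p" using pq that by auto
            then have uP: "u \<in> R" "E u p" "\<forall>w\<in>V - {p,q,u}. E w u = E w p" using that(1) unfolding A_def by auto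
            have "r0 \<noteq> u" using uP r0 by auto
            then have "E u r0 = E u q" using r0Q uP(1) unfolding R_def by auto
            then have "E u r0" using that True by simp
            moreover have "E r0 u = E r0 p" using uP r0 \<open>r0 \<noteq> u\<close> unfolding R_def by auto
            ultimately show False using r0 sym by blast
          next
            case vq: False
            have vp: "v \<noteq> p" using vA unfolding A_def by auto
            then have vR: "v \<in> R" using vV vq unfolding R_def by auto
            then have vQ: "E v q \<and> (\<forall>w\<in>V - {p,q,v}. E w v = E w q)" using H vA unfolding A_def R_def by auto
            have "E v p"
            proof (cases "u = p")
              case True then show ?thesis using that sym by blast
            next
              case False
              then have uP: "u \<in> R" "E u p" "\<forall>w\<in>V - {p,q,u}. E w u = E w p" using that(1) unfolding A_def by auto
              have "u \<noteq> v" using that vA by auto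
              then have "E v u = E v p" using uP vR unfolding R_def by auto
              then show ?thesis using that sym by blast
            qed
            then show False using noQp[OF vR vQ] by blast
          qed
        qed
        obtain xs where "walk E xs" "hd xs = p" "last xs = q" using c pq unfolding connected_def by blast
        then have "q \<in> A" using walk_closed[of E xs A] closed unfolding A_def by blast
        then show False using pq unfolding A_def R_def by auto
      qed
    qed
  qed
  then obtain r where r: "r \<in> R" "ok r" by blast
  define W where "W = V - {p,q,r}"
  have "card W + 3 = card V"
  proof -
    have "card W = card V - card {p,q,r}" unfolding W_def using r(1) pq fin unfolding R_def
      by (intro card_Diff_subset) auto
    moreover have "card {p,q,r} = 3" using pq r(1) unfolding R_def by auto
    moreover have "card {p,q,r} \<le> card V" using pq r(1) fin unfolding R_def by (intro card_mono) auto
    ultimately show ?thesis by simp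
  qed
  moreover have "local_resolving_set V E W"
    unfolding local_resolving_set_def
  proof (intro conjI ballI impI)
    show "W \<subseteq> V" unfolding W_def by auto
  next
    fix u v assume u: "u \<in> V - W" and v: "v \<in> V - W" and uv: "E u v"
    have uS: "u \<in> {p,q,r}" and vS: "v \<in> {p,q,r}" using u v unfolding W_def by auto
    have rV: "r \<in> V" using r unfolding R_def by auto
    have key: "\<exists>w\<in>W. dist E a w \<noteq> dist E b w" if "a \<in> {p,q}" "b = r" "E a b" for a b
    proof -
      have "E r a" using that sym by blast
      then have "\<exists>w\<in>V - {p,q,r}. E w r \<noteq> E w a" using r(2) that(1) unfolding ok_def by auto
      then obtain w where w: "w \<in> V - {p,q,r}" "E w r \<noteq> E w a" by blast
      have aV: "a \<in> V" using that(1) pq(1,2) by auto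
      have "dist E a w \<noteq> dist E r w" using dist_sep[OF g c aV rV _ not_sym[OF w(2)]] w(1) by blast
      then show ?thesis unfolding W_def using w(1) that(2) by blast
    qed
    have ne: "u \<noteq> v" using uv g unfolding graph_def by blast
    show "\<exists>w\<in>W. dist E u w \<noteq> dist E v w"
    proof (cases "v = r")
      case True
      then have "u \<in> {p,q}" using uS ne by auto
      then show ?thesis using key True uv by blast
    next
      case False
      then have "v \<in> {p,q}" using vS by auto
      then have "u = r" using uS uv pq(4) sym ne by blast
      have "\<exists>w\<in>W. dist E v w \<noteq> dist E u w" using key[of v u] \<open>v \<in> {p,q}\<close> \<open>u = r\<close> uv sym by blast
      then show ?thesis by (metis not_sym)
    qed
  qed
  ultimately show ?thesis by blast
qed

lemma part1:
  assumes g: "graph V E" and c: "connected V E" and w: "clique_number V E + 3 = card V"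
  shows "card V \<le> local_metric_dim V E + 8" "local_metric_dim V E + 3 \<le> card V"
proof -
  obtain W where W: "local_resolving_set V E W" "card W + 3 = card V" using upper_bound[OF assms] by blast
  have "local_metric_dim V E \<le> card W"
    unfolding local_metric_dim_def by (rule Least_le) (use W(1) in blast)
  then show "local_metric_dim V E + 3 \<le> card V" using W(2) by linarith
  have ex: "\<exists>k. \<exists>W. local_resolving_set V E W \<and> card W = k" using W(1) by blast
  obtain W' where W': "local_resolving_set V E W'" "card W' = local_metric_dim V E"
    using LeastI_ex[OF ex] unfolding local_metric_dim_def by blast
  show "card V \<le> local_metric_dim V E + 8" using lower_bound[OF assms W'(1)] W'(2) by simp
qed



lemma lrs_dim_le:
  assumes "local_resolving_set V E W" shows "local_metric_dim V E \<le> card W"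
  unfolding local_metric_dim_def by (rule Least_le) (use assms in blast)

lemma lrs_dim_attained:
  assumes "local_resolving_set V E W"
  obtains W' where "local_resolving_set V E W'" "card W' = local_metric_dim V E"
proof -
  have ex: "\<exists>k. \<exists>W. local_resolving_set V E W \<and> card W = k" using assms by blast
  show ?thesis using LeastI_ex[OF ex] that unfolding local_metric_dim_def by blast
qed

lemma dominating_connected:
  assumes "c \<in> V" "\<forall>u\<in>V. u \<noteq> c \<longrightarrow> E u c \<and> E c u"
  shows "connected V E"
  unfolding connected_def
proof (intro conjI ballI)
  show "V \<noteq> {}" using assms by blast
next
  fix u v assume u: "u \<in> V" and v: "v \<in> V"
  show "\<exists>xs. walk E xs \<and> hd xs = u \<and> last xs = v"
  proof (cases "u = c")
    case True
    then show ?thesis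
    proof (cases "v = c")
      case True then show ?thesis using \<open>u = c\<close> by (intro exI[of _ "[c]"]) simp
    next
      case False then show ?thesis using \<open>u = c\<close> assms v by (intro exI[of _ "[c,v]"]) simp
    qed
  next
    case uc: False
    then show ?thesis
    proof (cases "v = c")
      case True then show ?thesis using uc assms u by (intro exI[of _ "[u,c]"]) simp
    next
      case False then show ?thesis using uc assms u v by (intro exI[of _ "[u,c,v]"]) simp
    qed
  qed
qed

definition E2 :: "nat \<Rightarrow> nat \<Rightarrow> bool" where
  "E2 u v = ((u < 8 \<and> v < 8 \<and> u \<noteq> v) \<or> (u < 8 \<and> 8 \<le> v \<and> v < 11 \<and> odd (u div 2 ^ (v - 8)))
            \<or> (v < 8 \<and> 8 \<le> u \<and> u < 11 \<and> odd (v div 2 ^ (u - 8))))"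

lemma lt8: "(u::nat) < 8 \<longleftrightarrow> u = 0 \<or> u = 1 \<or> u = 2 \<or> u = 3 \<or> u = 4 \<or> u = 5 \<or> u = 6 \<or> u = 7"
  by auto

lemma X3: "8 \<le> (u::nat) \<Longrightarrow> u < 11 \<Longrightarrow> u = 8 \<or> u = 9 \<or> u = 10"
  by auto

lemma G2_graph: "graph {..<11} E2"
  unfolding graph_def E2_def by auto

lemma G2_dom: "u < 11 \<Longrightarrow> u \<noteq> 7 \<Longrightarrow> E2 u 7 \<and> E2 7 u"
proof -
  assume "u < 11" "u \<noteq> 7"
  then have "u < 8 \<or> u = 8 \<or> u = 9 \<or> u = 10" by auto
  then show ?thesis using \<open>u \<noteq> 7\<close> by (auto simp: E2_def)
qed

lemma G2_connected: "connected {..<11} E2"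
  by (rule dominating_connected[of 7]) (auto simp: G2_dom)

lemma G2_clique_bound:
  assumes "clique {..<11} E2 C" shows "card C \<le> 8"
proof (cases "C \<subseteq> {..<8}")
  case True then show ?thesis using card_mono[of "{..<8::nat}" C] by simp
next
  case False
  then obtain x where x0: "x \<in> C" "\<not> x < 8" by auto
  then have x: "x \<in> C" "8 \<le> x" "x < 11" using assms unfolding clique_def by auto
  have "C \<subseteq> insert x {1..<8}"
  proof
    fix y assume y: "y \<in> C"
    show "y \<in> insert x {1..<8}"
    proof (cases "y = x")
      case False
      then have "E2 y x" using assms x(1) y unfolding clique_def by blast
      then have "y < 8" "odd (y div 2 ^ (x - 8))" using x unfolding E2_def by auto
      then have "y \<noteq> 0" by (metis div_0 even_zero)
      then show ?thesis using \<open>y < 8\<close> by auto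
    qed simp
  qed
  then have "card C \<le> card (insert x {1..<8::nat})" by (intro card_mono) auto
  also have "\<dots> \<le> 8" by (simp add: card_insert_if)
  finally show ?thesis .
qed

lemma G2_clique_number: "clique_number {..<11} E2 = 8"
proof -
  obtain K where K: "clique {..<11} E2 K" "card K = clique_number {..<11} E2"
    using clique_facts(1)[OF G2_graph] by blast
  have "clique {..<11} E2 {..<8}" unfolding clique_def E2_def by auto
  then have "8 \<le> clique_number {..<11} E2" using clique_facts(2)[OF G2_graph] by fastforce
  moreover have "clique_number {..<11} E2 \<le> 8" using G2_clique_bound[OF K(1)] K(2) by simp
  ultimately show ?thesis by simp
qed

lemma G2_sep: "u < 8 \<Longrightarrow> v < 8 \<Longrightarrow> u \<noteq> v \<Longrightarrow> \<exists>w\<in>{8,9,10::nat}. E2 w u \<noteq> E2 w v"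
  unfolding lt8 by (elim disjE) (simp_all add: E2_def)

lemma G2_lrs: "local_resolving_set {..<11} E2 {8,9,10}"
  unfolding local_resolving_set_def
proof (intro conjI ballI impI)
  show "{8,9,10} \<subseteq> {..<11::nat}" by auto
next
  fix u v assume u: "u \<in> {..<11} - {8,9,10::nat}" and v: "v \<in> {..<11} - {8,9,10::nat}" and uv: "E2 u v"
  have "u < 8" "v < 8" using u v by auto
  moreover have "u \<noteq> v" using uv unfolding E2_def by auto
  ultimately obtain w where w: "w \<in> {8,9,10}" "E2 w u \<noteq> E2 w v" using G2_sep by blast
  have "dist E2 u w \<noteq> dist E2 v w"
    using dist_sep[OF G2_graph G2_connected _ _ _ w(2)] u v w(1) by auto
  then show "\<exists>w\<in>{8,9,10}. dist E2 u w \<noteq> dist E2 v w" using w(1) by blast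
qed

lemma G2_example: "graph {..<11} E2 \<and> connected {..<11} E2 \<and> clique_number {..<11} E2 + 3 = card {..<11::nat}
            \<and> local_metric_dim {..<11} E2 + 8 = card {..<11::nat}"
proof -
  have h: "clique_number {..<11} E2 + 3 = card {..<11::nat}" using G2_clique_number by simp
  have "card {..<11::nat} \<le> local_metric_dim {..<11} E2 + 8" using part1(1)[OF G2_graph G2_connected h] .
  moreover have "local_metric_dim {..<11} E2 \<le> 3" using lrs_dim_le[OF G2_lrs] by simp
  ultimately show ?thesis using h G2_graph G2_connected by simp
qed



definition E5 :: "nat \<Rightarrow> nat \<Rightarrow> bool" where
  "E5 u v = (u < 5 \<and> v < 5 \<and> (v = Suc u mod 5 \<or> u = Suc v mod 5))"

lemma lt5: "(u::nat) < 5 \<longleftrightarrow> u = 0 \<or> u = 1 \<or> u = 2 \<or> u = 3 \<or> u = 4"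
  by auto

lemma C5_irr: "\<not> E5 v v"
  unfolding E5_def using lt5[of v] by auto

lemma C5_graph: "graph {..<5} E5"
  unfolding graph_def using C5_irr by (auto simp: E5_def)

lemma C5_to0: "u < 5 \<Longrightarrow> \<exists>xs. walk E5 xs \<and> hd xs = u \<and> last xs = 0"
proof -
  assume "u < 5"
  then consider "u = 0" | "u = 1" | "u = 2" | "u = 3" | "u = 4" by (auto simp: lt5)
  then show ?thesis
  proof cases
    case 1 then show ?thesis by (intro exI[of _ "[0]"]) (simp add: E5_def)
  next
    case 2 then show ?thesis by (intro exI[of _ "[1,0]"]) (simp add: E5_def)
  next
    case 3 then show ?thesis by (intro exI[of _ "[2,1,0]"]) (simp add: E5_def)
  next
    case 4 then show ?thesis by (intro exI[of _ "[3,4,0]"]) (simp add: E5_def)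
  next
    case 5 then show ?thesis by (intro exI[of _ "[4,0]"]) (simp add: E5_def)
  qed
qed

lemma C5_from0: "u < 5 \<Longrightarrow> \<exists>xs. walk E5 xs \<and> hd xs = 0 \<and> last xs = u"
proof -
  assume "u < 5"
  then consider "u = 0" | "u = 1" | "u = 2" | "u = 3" | "u = 4" by (auto simp: lt5)
  then show ?thesis
  proof cases
    case 1 then show ?thesis by (intro exI[of _ "[0]"]) (simp add: E5_def)
  next
    case 2 then show ?thesis by (intro exI[of _ "[0,1]"]) (simp add: E5_def)
  next
    case 3 then show ?thesis by (intro exI[of _ "[0,1,2]"]) (simp add: E5_def)
  next
    case 4 then show ?thesis by (intro exI[of _ "[0,4,3]"]) (simp add: E5_def)
  next
    case 5 then show ?thesis by (intro exI[of _ "[0,4]"]) (simp add: E5_def)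
  qed
qed

lemma C5_connected: "connected {..<5} E5"
  unfolding connected_def
proof (intro conjI ballI)
  have "(0::nat) \<in> {..<5}" by simp
  then show "{..<5::nat} \<noteq> {}" by blast
next
  fix u v :: nat assume "u \<in> {..<5}" "v \<in> {..<5}"
  then obtain xs ys where xs: "walk E5 xs" "hd xs = u" "last xs = 0"
    and ys: "walk E5 ys" "hd ys = 0" "last ys = v"
    using C5_to0 C5_from0 by fastforce
  show "\<exists>xs. walk E5 xs \<and> hd xs = u \<and> last xs = v"
    using walk_append[OF xs(1) ys(1)] xs ys by (intro exI[of _ "xs @ tl ys"]) simp
qed

lemma C5_tri: "a < 5 \<Longrightarrow> b < 5 \<Longrightarrow> c < 5 \<Longrightarrow> a \<noteq> b \<Longrightarrow> b \<noteq> c \<Longrightarrow> a \<noteq> c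
   \<Longrightarrow> E5 a b \<Longrightarrow> E5 b c \<Longrightarrow> E5 a c \<Longrightarrow> False"
  unfolding lt5 E5_def by auto

lemma C5_clique_bound:
  assumes "clique {..<5} E5 C" shows "card C \<le> 2"
proof (rule ccontr)
  assume "\<not> card C \<le> 2"
  then have "3 \<le> card C" by simp
  then obtain T where T: "T \<subseteq> C" "card T = 3" by (meson obtain_subset_with_card_n)
  then obtain a b c where abc: "T = {a,b,c}" "a \<noteq> b" "b \<noteq> c" "a \<noteq> c" by (auto simp: card_3_iff)
  have "a \<in> C" "b \<in> C" "c \<in> C" using T abc by auto
  then show False using assms abc C5_tri[of a b c] unfolding clique_def by auto
qed

lemma C5_clique_number: "clique_number {..<5} E5 = 2"
proof -
  obtain K where K: "clique {..<5} E5 K" "card K = clique_number {..<5} E5"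
    using clique_facts(1)[OF C5_graph] by blast
  have "clique {..<5} E5 {0,1}" unfolding clique_def E5_def by auto
  then have "2 \<le> clique_number {..<5} E5" using clique_facts(2)[OF C5_graph] by fastforce
  moreover have "clique_number {..<5} E5 \<le> 2" using C5_clique_bound[OF K(1)] K(2) by simp
  ultimately show ?thesis by simp
qed

lemma C5_bad: "w < 5 \<Longrightarrow> \<exists>u v. u < 5 \<and> v < 5 \<and> u \<noteq> w \<and> v \<noteq> w \<and> E5 u v \<and> dist E5 u w = dist E5 v w"
proof -
  assume "w < 5"
  then consider "w = 0" | "w = 1" | "w = 2" | "w = 3" | "w = 4" by (auto simp: lt5)
  then show ?thesis
  proof cases
    case 1
    have "dist E5 2 0 = 2" by (rule dist_two[of _ _ _ 1]) (auto simp: E5_def)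
    moreover have "dist E5 3 0 = 2" by (rule dist_two[of _ _ _ 4]) (auto simp: E5_def)
    ultimately show ?thesis using 1 by (intro exI[of _ 2] exI[of _ 3]) (simp add: E5_def)
  next
    case 2
    have "dist E5 3 1 = 2" by (rule dist_two[of _ _ _ 2]) (auto simp: E5_def)
    moreover have "dist E5 4 1 = 2" by (rule dist_two[of _ _ _ 0]) (auto simp: E5_def)
    ultimately show ?thesis using 2 by (intro exI[of _ 3] exI[of _ 4]) (simp add: E5_def)
  next
    case 3
    have "dist E5 4 2 = 2" by (rule dist_two[of _ _ _ 3]) (auto simp: E5_def)
    moreover have "dist E5 0 2 = 2" by (rule dist_two[of _ _ _ 1]) (auto simp: E5_def)
    ultimately show ?thesis using 3 by (intro exI[of _ 4] exI[of _ 0]) (simp add: E5_def)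
  next
    case 4
    have "dist E5 0 3 = 2" by (rule dist_two[of _ _ _ 4]) (auto simp: E5_def)
    moreover have "dist E5 1 3 = 2" by (rule dist_two[of _ _ _ 2]) (auto simp: E5_def)
    ultimately show ?thesis using 4 by (intro exI[of _ 0] exI[of _ 1]) (simp add: E5_def)
  next
    case 5
    have "dist E5 1 4 = 2" by (rule dist_two[of _ _ _ 0]) (auto simp: E5_def)
    moreover have "dist E5 2 4 = 2" by (rule dist_two[of _ _ _ 3]) (auto simp: E5_def)
    ultimately show ?thesis using 5 by (intro exI[of _ 1] exI[of _ 2]) (simp add: E5_def)
  qed
qed

lemma C5_lrs_big:
  assumes "local_resolving_set {..<5} E5 W" shows "2 \<le> card W"
proof (rule ccontr)
  assume "\<not> 2 \<le> card W"
  then have "card W = 0 \<or> card W = 1" by auto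
  have WV: "W \<subseteq> {..<5}" using assms unfolding local_resolving_set_def by blast
  then have fW: "finite W" using finite_subset by blast
  then show False
  proof (cases "card W = 0")
    case True
    then have "W = {}" using fW by simp
    have "E5 0 1" by (simp add: E5_def)
    then show False using assms \<open>W = {}\<close> unfolding local_resolving_set_def by auto
  next
    case False
    then have "card W = 1" using \<open>card W = 0 \<or> card W = 1\<close> by simp
    then obtain w where w: "W = {w}" by (auto simp: card_1_singleton_iff)
    then have "w < 5" using WV by auto
    then obtain u v where uv: "u < 5" "v < 5" "u \<noteq> w" "v \<noteq> w" "E5 u v" "dist E5 u w = dist E5 v w"
      using C5_bad by blast
    have "u \<in> {..<5} - W" "v \<in> {..<5} - W" using uv w by auto
    then obtain w' where "w' \<in> W" "dist E5 u w' \<noteq> dist E5 v w'"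
      using assms uv(5) unfolding local_resolving_set_def by blast
    then show False using w uv(6) by simp
  qed
qed

lemma C5_example: "graph {..<5} E5 \<and> connected {..<5} E5 \<and> clique_number {..<5} E5 + 3 = card {..<5::nat}
            \<and> local_metric_dim {..<5} E5 + 3 = card {..<5::nat}"
proof -
  have h: "clique_number {..<5} E5 + 3 = card {..<5::nat}" using C5_clique_number by simp
  have "local_metric_dim {..<5} E5 + 3 \<le> card {..<5::nat}" using part1(2)[OF C5_graph C5_connected h] .
  moreover have "lrs": "local_resolving_set {..<5} E5 {..<5}" unfolding local_resolving_set_def by auto
  obtain W' where W': "local_resolving_set {..<5} E5 W'" "card W' = local_metric_dim {..<5} E5"
    using lrs_dim_attained[OF lrs] by blast
  have "2 \<le> local_metric_dim {..<5} E5" using C5_lrs_big[OF W'(1)] W'(2) by simp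
  ultimately show ?thesis using h C5_graph C5_connected by simp
qed


theorem corollary2p3:
  fixes V :: "'a set" and E :: "'a \<Rightarrow> 'a \<Rightarrow> bool"
  shows "(graph V E \<and> connected V E \<and> clique_number V E + 3 = card V \<longrightarrow>
            card V - 8 \<le> local_metric_dim V E \<and> local_metric_dim V E + 3 \<le> card V)
    \<and> (\<exists>(V' :: nat set) E'. graph V' E' \<and> connected V' E' \<and> clique_number V' E' + 3 = card V'
            \<and> local_metric_dim V' E' + 8 = card V')
    \<and> (\<exists>(V' :: nat set) E'. graph V' E' \<and> connected V' E' \<and> clique_number V' E' + 3 = card V'
            \<and> local_metric_dim V' E' + 3 = card V')"
proof (intro conjI)
  show "graph V E \<and> connected V E \<and> clique_number V E + 3 = card V \<longrightarrow>
            card V - 8 \<le> local_metric_dim V E \<and> local_metric_dim V E + 3 \<le> card V"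
  proof
    assume h: "graph V E \<and> connected V E \<and> clique_number V E + 3 = card V"
    then have "card V \<le> local_metric_dim V E + 8" "local_metric_dim V E + 3 \<le> card V"
      using part1 by blast+
    then show "card V - 8 \<le> local_metric_dim V E \<and> local_metric_dim V E + 3 \<le> card V" by linarith
  qed
  show "\<exists>(V' :: nat set) E'. graph V' E' \<and> connected V' E' \<and> clique_number V' E' + 3 = card V'
            \<and> local_metric_dim V' E' + 8 = card V'" using G2_example by blast
  show "\<exists>(V' :: nat set) E'. graph V' E' \<and> connected V' E' \<and> clique_number V' E' + 3 = card V'
            \<and> local_metric_dim V' E' + 3 = card V'" using C5_example by blast
qed

end
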